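(* Let $n\ge 1$. An element $A=(A_1,\dots,A_n)\in V_n$ is similar to an upper triangular $n$-matrix if and only if for all triples $1\le j,k,l\le n$, the triple $(A_j,A_k,A_l)\in V_3$ is similar to an upper triangular $3$-matrix.
   Context: $V_n=(M_{2\times2}(\mathbb{C}))^{\times n}$ with $GL(2,\mathbb{C})$ acting by simultaneous conjugation $g\cdot A=(gA_1g^{-1},\dots,gA_ng^{-1})$; two elements are similar if they lie in the same orbit. An $n$-matrix $A$ is upper triangular if every component $A_j$ is an upper triangular matrix. *)

theory Defs
  imports "HOL-Analysis.Analysis"
begin

text \<open>2x2 complex matrices: complex^2^2, entry M $ i $ j is row i, column j.
  An n-matrix (element of V_n) is a map nat => complex^2^2, only indices 0..<n matter.\<close>

definition upper_triangular2 :: "complex^2^2 \<Rightarrow> bool" where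
  "upper_triangular2 M \<longleftrightarrow> M $ 2 $ 1 = 0"

definition similar_tuple :: "nat \<Rightarrow> (nat \<Rightarrow> complex^2^2) \<Rightarrow> (nat \<Rightarrow> complex^2^2) \<Rightarrow> bool" where
  "similar_tuple n A B \<longleftrightarrow>
     (\<exists>g::complex^2^2. invertible g \<and> (\<forall>j<n. B j = g ** A j ** matrix_inv g))"

definition upper_triangular_tuple :: "nat \<Rightarrow> (nat \<Rightarrow> complex^2^2) \<Rightarrow> bool" where
  "upper_triangular_tuple n A \<longleftrightarrow> (\<forall>j<n. upper_triangular2 (A j))"

definition similar_to_upper_triangular :: "nat \<Rightarrow> (nat \<Rightarrow> complex^2^2) \<Rightarrow> bool" where
  "similar_to_upper_triangular n A \<longleftrightarrow>
     (\<exists>B. similar_tuple n A B \<and> upper_triangular_tuple n B)"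

end

theory Submission
  imports Defs
begin

definition eig :: "complex^2^2 \<Rightarrow> complex^2 \<Rightarrow> bool" where
  "eig M v \<longleftrightarrow> v \<noteq> 0 \<and> (\<exists>c. M *v v = c *s v)"

lemmas crd = vec_eq_iff forall_2 matrix_vector_mult_def sum_2

lemma mv_lin: "(M::complex^2^2) *v (a *s u + b *s w) = a *s (M *v u) + b *s (M *v w)"
  by (simp add: crd algebra_simps)

lemma mv_smult: "(M::complex^2^2) *v (c *s x) = c *s (M *v x)"
  by (simp add: crd algebra_simps)

lemma eig_scale:
  assumes "eig M q" "p \<noteq> 0" "p = c *s q"
  shows "eig M p"
proof -
  obtain l where l: "M *v q = l *s q" using assms(1) unfolding eig_def by blast
  have "M *v p = l *s p" unfolding assms(3) mv_smult l vector_smult_assoc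
    by (simp add: mult.commute)
  then show ?thesis using assms(2) unfolding eig_def by blast
qed

lemma par_sym:
  assumes "p \<noteq> 0" "p = c *s (q::complex^2)"
  shows "q = (1/c) *s p"
proof -
  have "c \<noteq> 0" using assms by auto
  then show ?thesis using assms(2) by (simp add: vector_smult_assoc)
qed

lemma nonpar_det:
  fixes u w :: "complex^2"
  assumes "w \<noteq> 0" "\<not> (\<exists>c. u = c *s w)"
  shows "u$1 * w$2 - u$2 * w$1 \<noteq> 0"
proof
  assume d: "u$1 * w$2 - u$2 * w$1 = 0"
  show False
  proof (cases "w$1 = 0")
    case True
    then have "w$2 \<noteq> 0" using assms(1) by (auto simp: crd)
    then have "u = (u$2 / w$2) *s w" using d True by (simp add: crd field_simps)
    then show False using assms(2) by blast
  next
    case False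
    then have "u = (u$1 / w$1) *s w" using d by (simp add: crd field_simps)
    then show False using assms(2) by blast
  qed
qed

lemma span2:
  fixes u w y :: "complex^2"
  assumes "u$1 * w$2 - u$2 * w$1 \<noteq> 0"
  shows "\<exists>a b. y = a *s u + b *s w"
proof -
  define d where "d = u$1 * w$2 - u$2 * w$1"
  have d: "d \<noteq> 0" using assms d_def by simp
  have c1: "y$1 = ((y$1 * w$2 - y$2 * w$1) / d) * u$1 + ((u$1 * y$2 - u$2 * y$1) / d) * w$1"
  proof -
    have "y$1 * d = (y$1 * w$2 - y$2 * w$1) * u$1 + (u$1 * y$2 - u$2 * y$1) * w$1"
      unfolding d_def by (simp add: algebra_simps)
    then have "y$1 = ((y$1 * w$2 - y$2 * w$1) * u$1 + (u$1 * y$2 - u$2 * y$1) * w$1) / d"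
      using d by (metis nonzero_mult_div_cancel_right)
    then show ?thesis by (simp add: add_divide_distrib)
  qed
  have c2: "y$2 = ((y$1 * w$2 - y$2 * w$1) / d) * u$2 + ((u$1 * y$2 - u$2 * y$1) / d) * w$2"
  proof -
    have "y$2 * d = (y$1 * w$2 - y$2 * w$1) * u$2 + (u$1 * y$2 - u$2 * y$1) * w$2"
      unfolding d_def by (simp add: algebra_simps)
    then have "y$2 = ((y$1 * w$2 - y$2 * w$1) * u$2 + (u$1 * y$2 - u$2 * y$1) * w$2) / d"
      using d by (metis nonzero_mult_div_cancel_right)
    then show ?thesis by (simp add: add_divide_distrib)
  qed
  have "y = ((y$1 * w$2 - y$2 * w$1) / d) *s u + ((u$1 * y$2 - u$2 * y$1) / d) *s w"
    using c1 c2 by (simp add: crd)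
  then show ?thesis by blast
qed

lemma indep2:
  fixes u w :: "complex^2"
  assumes "u$1 * w$2 - u$2 * w$1 \<noteq> 0" "a *s u + b *s w = 0"
  shows "a = 0 \<and> b = 0"
proof -
  have e1: "a * u$1 + b * w$1 = 0" and e2: "a * u$2 + b * w$2 = 0"
    using assms(2) by (simp_all add: crd)
  have "a * (u$1 * w$2 - u$2 * w$1) = w$2 * (a * u$1 + b * w$1) - w$1 * (a * u$2 + b * w$2)"
    by (simp add: algebra_simps)
  then have "a = 0" using e1 e2 assms(1) by simp
  have "b * (u$1 * w$2 - u$2 * w$1) = u$1 * (a * u$2 + b * w$2) - u$2 * (a * u$1 + b * w$1)"
    by (simp add: algebra_simps)
  then have "b = 0" using e1 e2 assms(1) by simp
  then show ?thesis using \<open>a = 0\<close> by simp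
qed

lemma three_lines:
  assumes x: "x \<noteq> 0" "\<not> eig M x"
    and u: "eig M u" and w: "eig M w" and z: "eig M z"
  shows "(\<exists>c. z = c *s u) \<or> (\<exists>c. z = c *s w) \<or> (\<exists>c. u = c *s w)"
proof (rule ccontr)
  assume H: "\<not> ?thesis"
  have w0: "w \<noteq> 0" using w unfolding eig_def by blast
  have d: "u$1 * w$2 - u$2 * w$1 \<noteq> 0" using nonpar_det[OF w0] H by blast
  obtain a where a: "M *v u = a *s u" using u unfolding eig_def by blast
  obtain b where b: "M *v w = b *s w" using w unfolding eig_def by blast
  obtain c where c: "M *v z = c *s z" using z unfolding eig_def by blast
  have ab: "a \<noteq> b"
  proof
    assume "a = b"
    obtain p q where pq: "x = p *s u + q *s w" using span2[OF d] by blast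
    have "M *v x = a *s x" unfolding pq mv_lin a b \<open>a = b\<close>
      by (simp add: vector_smult_assoc algebra_simps vector_add_ldistrib)
    then show False using x unfolding eig_def by blast
  qed
  obtain p q where pq: "z = p *s u + q *s w" using span2[OF d] by blast
  have "M *v z = (p * a) *s u + (q * b) *s w" unfolding pq mv_lin a b
    by (simp add: vector_smult_assoc)
  then have "(p * a) *s u + (q * b) *s w = c *s (p *s u + q *s w)" using c pq by simp
  then have "(p * (a - c)) *s u + (q * (b - c)) *s w = 0"
    by (simp add: crd algebra_simps)
  then have e: "p * (a - c) = 0 \<and> q * (b - c) = 0" using indep2[OF d] by blast
  show False
  proof (cases "p = 0")
    case True
    then have "z = q *s w" using pq by simp
    then show False using H by blast
  next
    case False
    show False
    proof (cases "q = 0")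
      case True
      then have "z = p *s u" using pq by simp
      then show False using H by blast
    next
      case False
      then show False using e \<open>p \<noteq> 0\<close> ab by simp
    qed
  qed
qed

lemma common_eig:
  assumes n: "n \<ge> (1::nat)"
    and H: "\<And>j k l. j < n \<Longrightarrow> k < n \<Longrightarrow> l < n \<Longrightarrow>
              \<exists>v. eig (F j) v \<and> eig (F k) v \<and> eig (F l) v"
  shows "\<exists>v. v \<noteq> 0 \<and> (\<forall>j<n. eig (F j) v)"
proof (cases "\<forall>j<n. \<forall>x. x \<noteq> 0 \<longrightarrow> eig (F j) x")
  case True
  have "(vector [1, 0] :: complex^2) \<noteq> 0" by (simp add: crd)
  then show ?thesis using True by blast
next
  case False
  then obtain j0 x where j0: "j0 < n" and x: "x \<noteq> 0" "\<not> eig (F j0) x" by blast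
  obtain u where u: "eig (F j0) u" using H[OF j0 j0 j0] by blast
  show ?thesis
  proof (cases "\<forall>k<n. eig (F k) u")
    case True
    then show ?thesis using u unfolding eig_def by blast
  next
    case False
    then obtain k1 where k1: "k1 < n" "\<not> eig (F k1) u" by blast
    obtain w where w: "eig (F j0) w" "eig (F k1) w" using H[OF j0 k1(1) k1(1)] by blast
    have "\<forall>l<n. eig (F l) w"
    proof (intro allI impI, rule ccontr)
      fix l assume l: "l < n" "\<not> eig (F l) w"
      obtain z where z: "eig (F j0) z" "eig (F k1) z" "eig (F l) z"
        using H[OF j0 k1(1) l(1)] by blast
      have u0: "u \<noteq> 0" using u unfolding eig_def by blast
      have z0: "z \<noteq> 0" using z unfolding eig_def by blast
      have w0: "w \<noteq> 0" using w unfolding eig_def by blast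
      from three_lines[OF x u w(1) z(1)] show False
      proof (elim disjE exE)
        fix c assume "z = c *s u"
        then have "u = (1/c) *s z" using par_sym z0 by blast
        then show False using eig_scale[OF z(2) u0] k1(2) by blast
      next
        fix c assume "z = c *s w"
        then have "w = (1/c) *s z" using par_sym z0 by blast
        then show False using eig_scale[OF z(3) w0] l(2) by blast
      next
        fix c assume "u = c *s w"
        then show False using eig_scale[OF w(2) u0] k1(2) by blast
      qed
    qed
    then show ?thesis using w unfolding eig_def by blast
  qed
qed

lemmas crdm = crd matrix_matrix_mult_def mat_def

lemma e1_col: "((M::complex^2^2) *v vector [1, 0]) $ 2 = M $ 2 $ 1"
  by (simp add: crd)

lemma exists_P:
  assumes "(v::complex^2) \<noteq> 0"
  shows "\<exists>P P'::complex^2^2. P ** P' = mat 1 \<and> P' ** P = mat 1 \<and> P *v vector [1, 0] = v"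
proof (cases "v$1 = 0")
  case True
  then have b: "v$2 \<noteq> 0" using assms by (auto simp: crd)
  let ?P = "vector [vector [0, 1], vector [v$2, 0]] :: complex^2^2"
  let ?P' = "vector [vector [0, 1 / v$2], vector [1, 0]] :: complex^2^2"
  have "?P ** ?P' = mat 1" "?P' ** ?P = mat 1" "?P *v vector [1, 0] = v"
    using b True by (simp_all add: crdm)
  then show ?thesis by blast
next
  case False
  let ?P = "vector [vector [v$1, 0], vector [v$2, 1]] :: complex^2^2"
  let ?P' = "vector [vector [1 / v$1, 0], vector [- v$2 / v$1, 1]] :: complex^2^2"
  have "?P ** ?P' = mat 1" "?P' ** ?P = mat 1" "?P *v vector [1, 0] = v"
    using False by (simp_all add: crdm field_simps)
  then show ?thesis by blast
qed

lemma inv_props: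
  assumes "invertible (g::complex^2^2)"
  shows "g ** matrix_inv g = mat 1 \<and> matrix_inv g ** g = mat 1"
  using assms unfolding invertible_def matrix_inv_def by (rule someI_ex)

lemma key:
  "similar_to_upper_triangular n A \<longleftrightarrow> (\<exists>v. v \<noteq> 0 \<and> (\<forall>j<n. eig (A j) v))"
proof
  assume "similar_to_upper_triangular n A"
  then obtain B g where g: "invertible g" and Bg: "\<forall>j<n. B j = g ** A j ** matrix_inv g"
    and uB: "\<forall>j<n. upper_triangular2 (B j)"
    unfolding similar_to_upper_triangular_def similar_tuple_def upper_triangular_tuple_def by metis
  have ut: "\<forall>j<n. upper_triangular2 (g ** A j ** matrix_inv g)"
  proof (intro allI impI)
    fix j assume "j < n"
    then show "upper_triangular2 (g ** A j ** matrix_inv g)" using Bg uB by metis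
  qed
  define mi where "mi = matrix_inv g"
  have gi: "g ** mi = mat 1" "mi ** g = mat 1" using inv_props[OF g] mi_def by auto
  define e where "e = (vector [1, 0] :: complex^2)"
  define v where "v = mi *v e"
  have "g *v v = e" unfolding v_def matrix_vector_mul_assoc gi by simp
  moreover have "e \<noteq> 0" unfolding e_def by (simp add: crd)
  ultimately have v0: "v \<noteq> 0" by auto
  have "\<forall>j<n. eig (A j) v"
  proof (intro allI impI)
    fix j assume j: "j < n"
    define B where "B = g ** A j ** mi"
    have Bu: "B $ 2 $ 1 = 0" using ut j unfolding B_def mi_def upper_triangular2_def by blast
    have "mi ** B = A j ** mi" unfolding B_def
      by (simp add: matrix_mul_assoc gi)
    have Be: "B *v e = (B $ 1 $ 1) *s e" using Bu unfolding e_def by (simp add: crd)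
    have "A j *v v = (A j ** mi) *v e" unfolding v_def matrix_vector_mul_assoc ..
    also have "\<dots> = mi *v (B *v e)" unfolding matrix_vector_mul_assoc \<open>mi ** B = A j ** mi\<close> ..
    also have "\<dots> = (B $ 1 $ 1) *s v" unfolding Be mv_smult v_def ..
    finally show "eig (A j) v" using v0 unfolding eig_def by blast
  qed
  then show "\<exists>v. v \<noteq> 0 \<and> (\<forall>j<n. eig (A j) v)" using v0 by blast
next
  assume "\<exists>v. v \<noteq> 0 \<and> (\<forall>j<n. eig (A j) v)"
  then obtain v where v0: "v \<noteq> 0" and ev: "\<forall>j<n. eig (A j) v" by blast
  obtain P P' :: "complex^2^2" where PP: "P ** P' = mat 1" "P' ** P = mat 1" and Pv: "P *v vector [1, 0] = v"
    using exists_P[OF v0] by blast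
  have ginv: "invertible P'" unfolding invertible_def using PP by blast
  have mi: "matrix_inv P' = P"
  proof -
    have h: "P' ** matrix_inv P' = mat 1" "matrix_inv P' ** P' = mat 1" using inv_props[OF ginv] by auto
    have "matrix_inv P' = matrix_inv P' ** (P' ** P)" using PP by simp
    also have "\<dots> = P" using h by (simp add: matrix_mul_assoc)
    finally show ?thesis .
  qed
  have "\<forall>j<n. upper_triangular2 (P' ** A j ** matrix_inv P')"
  proof (intro allI impI)
    fix j assume j: "j < n"
    obtain c where c: "A j *v v = c *s v" using ev j unfolding eig_def by blast
    have "(P' ** A j ** P) *v vector [1, 0] = P' *v (A j *v (P *v vector [1, 0]))"
      by (simp add: matrix_vector_mul_assoc matrix_mul_assoc)
    also have "\<dots> = c *s (P' *v v)" unfolding Pv c mv_smult ..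
    also have "P' *v v = vector [1, 0]" unfolding Pv[symmetric] matrix_vector_mul_assoc PP by simp
    finally have "(P' ** A j ** P) *v vector [1, 0] = c *s vector [1, 0]" .
    then have "((P' ** A j ** P) *v vector [1, 0]) $ 2 = 0" by simp
    then show "upper_triangular2 (P' ** A j ** matrix_inv P')"
      unfolding mi upper_triangular2_def e1_col .
  qed
  then have "similar_tuple n A (\<lambda>j. P' ** A j ** matrix_inv P') \<and>
      upper_triangular_tuple n (\<lambda>j. P' ** A j ** matrix_inv P')"
    unfolding similar_tuple_def upper_triangular_tuple_def using ginv by blast
  then show "similar_to_upper_triangular n A"
    unfolding similar_to_upper_triangular_def by blast
qed

lemma less3: "(\<forall>i<(3::nat). P i) \<longleftrightarrow> P 0 \<and> P 1 \<and> P 2"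
proof -
  have "(i::nat) < 3 \<longleftrightarrow> i = 0 \<or> i = 1 \<or> i = 2" for i by auto
  then show ?thesis by auto
qed

lemma eig_nz: "eig M v \<Longrightarrow> v \<noteq> 0"
  unfolding eig_def by blast

lemma triple_iff:
  "similar_to_upper_triangular 3 (\<lambda>i. [X, Y, Z] ! i) \<longleftrightarrow>
     (\<exists>v. eig X v \<and> eig Y v \<and> eig Z v)"
proof -
  have e: "(\<forall>j<3. eig ([X, Y, Z] ! j) v) \<longleftrightarrow> eig X v \<and> eig Y v \<and> eig Z v" for v
    unfolding less3 by simp
  show ?thesis
  proof
    assume "similar_to_upper_triangular 3 (\<lambda>i. [X, Y, Z] ! i)"
    then obtain v where "v \<noteq> 0" "\<forall>j<3. eig ([X, Y, Z] ! j) v" unfolding key by blast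
    then show "\<exists>v. eig X v \<and> eig Y v \<and> eig Z v" using e by blast
  next
    assume "\<exists>v. eig X v \<and> eig Y v \<and> eig Z v"
    then obtain v where v: "eig X v" "eig Y v" "eig Z v" by blast
    then have "v \<noteq> 0" "\<forall>j<3. eig ([X, Y, Z] ! j) v" using e eig_nz by blast+
    then show "similar_to_upper_triangular 3 (\<lambda>i. [X, Y, Z] ! i)" unfolding key by blast
  qed
qed

theorem theorem2p7:
  fixes n :: nat and A :: "nat \<Rightarrow> complex^2^2"
  assumes "n \<ge> 1"
  shows "similar_to_upper_triangular n A \<longleftrightarrow>
    (\<forall>j<n. \<forall>k<n. \<forall>l<n.
       similar_to_upper_triangular 3 (\<lambda>i. [A j, A k, A l] ! i))"
proof
  assume "similar_to_upper_triangular n A"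
  then obtain v where v: "v \<noteq> 0" "\<forall>j<n. eig (A j) v" unfolding key by blast
  show "\<forall>j<n. \<forall>k<n. \<forall>l<n. similar_to_upper_triangular 3 (\<lambda>i. [A j, A k, A l] ! i)"
  proof (intro allI impI)
    fix j k l assume "j < n" "k < n" "l < n"
    then have "eig (A j) v \<and> eig (A k) v \<and> eig (A l) v" using v by blast
    then show "similar_to_upper_triangular 3 (\<lambda>i. [A j, A k, A l] ! i)"
      unfolding triple_iff by blast
  qed
next
  assume H: "\<forall>j<n. \<forall>k<n. \<forall>l<n. similar_to_upper_triangular 3 (\<lambda>i. [A j, A k, A l] ! i)"
  have "\<exists>v. eig (A j) v \<and> eig (A k) v \<and> eig (A l) v"
    if "j < n" "k < n" "l < n" for j k l
    using H that triple_iff by blast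
  then have "\<exists>v. v \<noteq> 0 \<and> (\<forall>j<n. eig (A j) v)" by (rule common_eig[OF assms])
  then show "similar_to_upper_triangular n A" by (simp only: key)
qed

end
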